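(* Let $X$ be an irreducible positive recurrent Markov chain on a countable state space $S$ with transition matrix $P$ and stationary distribution $\pi$. Let $K=\{z\}$ and let $A\supseteq K$ be a finite subset of $S$, $A'=A\setminus K$, $T_K=\inf\{n\ge1:X_n=z\}$, $T=\inf\{n\ge1:X_n\notin A\}$. Let $r:S\to[0,\infty)$ and suppose there are non-negative functions $g_1,g_2$ on $K^c$ and $h_1,h_2$ on $A$ such that for all $x\in K^c$ $$\sum_{y\in K^c}P(x,y)g_1(y)\le g_1(x)-r(x),\qquad \sum_{y\in K^c}P(x,y)g_2(y)\le g_2(x)-1,$$ and for all $x\in A$ and $i=1,2$, $\sum_{y\in A^c}P(x,y)g_i(y)\le h_i(x)$. Write $h_i=(h_{i1},h_{i2})$ for the restrictions to $K$ and $A'$ and set $\beta_i(z)=h_{i1}(z)+(P_{12}(I-P_{22})^{-1}h_{i2})(z)$. For non-negative $f$ let $\underline\kappa(z,f)=E_z\sum_{j=0}^{(T\wedge T_K)-1}f(X_j)$ and $\tilde\pi(f)=\underline\kappa(z,f)/\underline\kappa(z,e)$ with $e\equiv 1$, and let $\pi^*$ be the probability on $S$ given by $\pi^*(x)=\tilde\pi(e_x)$, where $e_x$ is the indicator of $\{x\}$. Then $$\|\pi^*-\pi\|_r\le 2\max\left(\frac{\beta_1(z)}{\underline\kappa(z,e)},\ \tilde\pi(r)\cdot\frac{\beta_2(z)}{\underline\kappa(z,e)}\right).$$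
   Context: $E_z$ is expectation for the chain started at $z$. $P$ is written in block form with respect to $(K,A',A^c)$; $P_{12}$ is the $K\times A'$ block and $P_{22}$ the $A'\times A'$ block (with $I-P_{22}$ invertible). The $r$-weighted total variation distance is $\|\mu-\pi\|_r=\sup_{|f|\le r}\left|\sum_{x\in S}\mu(x)f(x)-\sum_{x\in S}\pi(x)f(x)\right|$. When $K$ is a singleton, both the Perron–Frobenius and row-normalized approximations of the paper reduce to $\pi^*$. *)

theory Defs
  imports "HOL-Probability.Probability"
begin

text \<open>Markov chain with transition kernel P (row x is the pmf P x, so P(x,y) = pmf (P x) y).
  walk P x n is the law of the path (X_0,...,X_n) of the chain started at X_0 = x.\<close>
fun walk :: "('a \<Rightarrow> 'a pmf) \<Rightarrow> 'a \<Rightarrow> nat \<Rightarrow> 'a list pmf" where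
  "walk P x 0 = return_pmf [x]"
| "walk P x (Suc n) = bind_pmf (walk P x n) (\<lambda>xs. map_pmf (\<lambda>y. xs @ [y]) (P (last xs)))"

definition nstep :: "('a \<Rightarrow> 'a pmf) \<Rightarrow> nat \<Rightarrow> 'a \<Rightarrow> 'a \<Rightarrow> real" where
  "nstep P n x y = pmf (map_pmf last (walk P x n)) y"

definition irreducible_chain :: "('a \<Rightarrow> 'a pmf) \<Rightarrow> bool" where
  "irreducible_chain P \<longleftrightarrow> (\<forall>x y. \<exists>n. nstep P n x y > 0)"

text \<open>occ P B f x = E_x sum_{j=0}^{tau-1} f(X_j), where tau = inf{n >= 1 : X_n \<notin> B}.
  Computed by monotone convergence as the supremum over horizons n of the expectation of
  the truncated sum sum_{j <= min(n, tau-1)} f(X_j); note j < tau iff X_1,...,X_j \<in> B.\<close>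
definition occ :: "('a \<Rightarrow> 'a pmf) \<Rightarrow> 'a set \<Rightarrow> ('a \<Rightarrow> real) \<Rightarrow> 'a \<Rightarrow> ennreal" where
  "occ P B f x = (SUP n. \<integral>\<^sup>+ xs. (\<Sum>j\<le>n. if (\<forall>i\<in>{1..j}. xs ! i \<in> B) then ennreal (f (xs ! j)) else 0)
                        \<partial>measure_pmf (walk P x n))"

text \<open>Positive recurrence: E_x T_x < \<infinity> with T_x = inf{n >= 1 : X_n = x}.\<close>
definition positive_recurrent :: "('a \<Rightarrow> 'a pmf) \<Rightarrow> bool" where
  "positive_recurrent P \<longleftrightarrow> (\<forall>x. occ P (- {x}) (\<lambda>_. 1) x < \<infinity>)"

definition stationary_distribution :: "('a \<Rightarrow> 'a pmf) \<Rightarrow> ('a \<Rightarrow> real) \<Rightarrow> bool" where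
  "stationary_distribution P \<pi> \<longleftrightarrow> (\<forall>x. \<pi> x \<ge> 0) \<and> (\<pi> has_sum 1) UNIV \<and>
     (\<forall>y. ((\<lambda>x. \<pi> x * pmf (P x) y) has_sum \<pi> y) UNIV)"

definition rtv :: "('a \<Rightarrow> real) \<Rightarrow> ('a \<Rightarrow> real) \<Rightarrow> ('a \<Rightarrow> real) \<Rightarrow> real" where
  "rtv r \<mu> \<nu> = Sup {\<bar>(\<Sum>\<^sub>\<infinity>x. \<mu> x * f x) - (\<Sum>\<^sub>\<infinity>x. \<nu> x * f x)\<bar> | f. \<forall>x. \<bar>f x\<bar> \<le> r x}"

definition IminusP22 :: "('a \<Rightarrow> 'a pmf) \<Rightarrow> 'a set \<Rightarrow> ('a \<Rightarrow> real) \<Rightarrow> ('a \<Rightarrow> real)" where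
  "IminusP22 P A' v = (\<lambda>x\<in>A'. v x - (\<Sum>y\<in>A'. pmf (P x) y * v y))"

definition IminusP22_invertible :: "('a \<Rightarrow> 'a pmf) \<Rightarrow> 'a set \<Rightarrow> bool" where
  "IminusP22_invertible P A' \<longleftrightarrow> bij_betw (IminusP22 P A') (extensional A') (extensional A')"

definition beta :: "('a \<Rightarrow> 'a pmf) \<Rightarrow> 'a set \<Rightarrow> 'a \<Rightarrow> ('a \<Rightarrow> real) \<Rightarrow> real" where
  "beta P A z h = (let A' = A - {z};
                       w = inv_into (extensional A') (IminusP22 P A') (restrict h A')
                   in h z + (\<Sum>y\<in>A'. pmf (P z) y * w y))"

end

theory Submission
  imports Defs "HOL-Analysis.Analysis"
begin


lemma walk_set: "xs \<in> set_pmf (walk P x n) \<Longrightarrow> length xs = Suc n \<and> hd xs = x"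
proof (induction n arbitrary: xs)
  case 0
  then show ?case by simp
next
  case (Suc n)
  then obtain ys y where "ys \<in> set_pmf (walk P x n)" "xs = ys @ [y]" by auto
  with Suc.IH[of ys] show ?case by (cases ys) auto
qed

lemma walk_first: "walk P x (Suc n) = bind_pmf (P x) (\<lambda>y. map_pmf (\<lambda>ys. x # ys) (walk P y n))"
proof (induction n)
  case 0
  then show ?case by (simp add: map_pmf_def bind_return_pmf bind_assoc_pmf bind_return_pmf')
next
  case (Suc n)
  have "walk P x (Suc (Suc n)) = bind_pmf (walk P x (Suc n)) (\<lambda>xs. map_pmf (\<lambda>y. xs @ [y]) (P (last xs)))"
    by simp
  also have "\<dots> = bind_pmf (P x) (\<lambda>y. bind_pmf (map_pmf ((#) x) (walk P y n)) (\<lambda>xs. map_pmf (\<lambda>y. xs @ [y]) (P (last xs))))"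
    by (subst Suc) (rule bind_assoc_pmf)
  also have "\<dots> = bind_pmf (P x) (\<lambda>y. map_pmf ((#) x) (walk P y (Suc n)))"
  proof (intro bind_pmf_cong refl)
    fix y
    have "bind_pmf (map_pmf ((#) x) (walk P y n)) (\<lambda>xs. map_pmf (\<lambda>y. xs @ [y]) (P (last xs)))
       = bind_pmf (walk P y n) (\<lambda>ys. map_pmf (\<lambda>w. x # (ys @ [w])) (P (last ys)))"
      unfolding bind_map_pmf
      apply (intro bind_pmf_cong refl)
      apply (drule walk_set)
      apply (simp add: map_pmf_comp)
      by (metis Nitpick.size_list_simp(2) One_nat_def last_ConsR nat.distinct(1))
    also have "\<dots> = map_pmf ((#) x) (walk P y (Suc n))"
      by (simp add: map_bind_pmf map_pmf_comp)
    finally show "bind_pmf (map_pmf ((#) x) (walk P y n)) (\<lambda>xs. map_pmf (\<lambda>y. xs @ [y]) (P (last xs))) = map_pmf ((#) x) (walk P y (Suc n))" .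
  qed
  finally show ?case .
qed

lemma SUP_Suc_mono:
  fixes S :: "nat \<Rightarrow> 'b::complete_lattice"
  assumes "mono S"
  shows "(SUP n. S (Suc n)) = (SUP n. S n)"
proof (rule antisym)
  show "(SUP n. S (Suc n)) \<le> (SUP n. S n)"
    by (rule SUP_least, rule SUP_upper, simp)
  show "(SUP n. S n) \<le> (SUP n. S (Suc n))"
  proof (rule SUP_least)
    fix n
    have "S n \<le> S (Suc n)" using assms by (simp add: monoD)
    also have "\<dots> \<le> (SUP n. S (Suc n))" by (rule SUP_upper) simp
    finally show "S n \<le> (SUP n. S (Suc n))" .
  qed
qed

lemma ball_0k: "(\<forall>i\<in>{0..k::nat}. Q i) \<longleftrightarrow> Q 0 \<and> (\<forall>i\<in>{1..k}. Q i)"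
  by (metis atLeastAtMost_iff le0 less_one linorder_not_le)

definition Qop :: "('a \<Rightarrow> 'a pmf) \<Rightarrow> 'a set \<Rightarrow> ('a \<Rightarrow> ennreal) \<Rightarrow> 'a \<Rightarrow> ennreal" where
  "Qop P B u x = (\<integral>\<^sup>+y. indicator B y * u y \<partial>measure_pmf (P x))"

definition Gop :: "('a \<Rightarrow> 'a pmf) \<Rightarrow> 'a set \<Rightarrow> ('a \<Rightarrow> ennreal) \<Rightarrow> 'a \<Rightarrow> ennreal" where
  "Gop P B u x = (\<Sum>j. (Qop P B ^^ j) u x)"

lemma W:
  assumes "j \<le> n"
  shows "(\<integral>\<^sup>+xs. (if (\<forall>i\<in>{1..j}. xs ! i \<in> B) then ennreal (f (xs ! j)) else 0) \<partial>measure_pmf (walk P x n))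
        = (Qop P B ^^ j) (\<lambda>y. ennreal (f y)) x"
  using assms
proof (induction n arbitrary: x j)
  case 0
  then show ?case by simp
next
  case (Suc n)
  show ?case
  proof (cases j)
    case 0
    have "(\<integral>\<^sup>+xs. (if (\<forall>i\<in>{1..j}. xs ! i \<in> B) then ennreal (f (xs ! j)) else 0) \<partial>measure_pmf (walk P x (Suc n)))
        = (\<integral>\<^sup>+xs. ennreal (f x) \<partial>measure_pmf (walk P x (Suc n)))"
      apply (intro nn_integral_cong_AE AE_pmfI)
      subgoal for xs using walk_set[of xs P x "Suc n"] 0 by (cases xs) auto
      done
    then show ?thesis using 0 by simp
  next
    case (Suc k)
    have "(\<integral>\<^sup>+xs. (if (\<forall>i\<in>{1..j}. xs ! i \<in> B) then ennreal (f (xs ! j)) else 0) \<partial>measure_pmf (walk P x (Suc n)))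
       = (\<integral>\<^sup>+y. \<integral>\<^sup>+ys. (if (\<forall>i\<in>{1..j}. (x#ys) ! i \<in> B) then ennreal (f ((x#ys) ! j)) else 0) \<partial>measure_pmf (walk P y n) \<partial>measure_pmf (P x))"
      by (simp only: walk_first nn_integral_bind_pmf nn_integral_map_pmf)
    also have "\<dots> = (\<integral>\<^sup>+y. indicator B y * \<integral>\<^sup>+ys. (if (\<forall>i\<in>{1..k}. ys ! i \<in> B) then ennreal (f (ys ! k)) else 0) \<partial>measure_pmf (walk P y n) \<partial>measure_pmf (P x))"
    proof (intro nn_integral_cong)
      fix y
      have "(\<integral>\<^sup>+ys. (if (\<forall>i\<in>{1..j}. (x#ys) ! i \<in> B) then ennreal (f ((x#ys) ! j)) else 0) \<partial>measure_pmf (walk P y n))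
          = (\<integral>\<^sup>+ys. indicator B y * (if (\<forall>i\<in>{1..k}. ys ! i \<in> B) then ennreal (f (ys ! k)) else 0) \<partial>measure_pmf (walk P y n))"
      proof (intro nn_integral_cong_AE AE_pmfI)
        fix ys assume "ys \<in> set_pmf (walk P y n)"
        from walk_set[OF this] have ys: "length ys = Suc n" "hd ys = y" by auto
        have "(\<forall>i\<in>{1..j}. (x#ys) ! i \<in> B) \<longleftrightarrow> (\<forall>i\<in>{0..k}. ys ! i \<in> B)"
          unfolding Suc
          apply safe
          subgoal for i
            apply (drule bspec[of _ _ "Suc i"]) by auto
          subgoal for i
            apply (cases i) by auto
          done
        also have "\<dots> \<longleftrightarrow> y \<in> B \<and> (\<forall>i\<in>{1..k}. ys ! i \<in> B)"
        proof -
          have "ys ! 0 = y" using ys by (metis hd_conv_nth list.size(3) nat.distinct(1))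
          then show ?thesis using ball_0k[of k "\<lambda>i. ys ! i \<in> B"] by simp
        qed
        finally show "(if (\<forall>i\<in>{1..j}. (x#ys) ! i \<in> B) then ennreal (f ((x#ys) ! j)) else 0)
          = indicator B y * (if (\<forall>i\<in>{1..k}. ys ! i \<in> B) then ennreal (f (ys ! k)) else 0)"
          using Suc by (auto simp: indicator_def)
      qed
      also have "\<dots> = indicator B y * (\<integral>\<^sup>+ys. (if (\<forall>i\<in>{1..k}. ys ! i \<in> B) then ennreal (f (ys ! k)) else 0) \<partial>measure_pmf (walk P y n))"
        by (simp add: nn_integral_cmult)
      finally show "(\<integral>\<^sup>+ys. (if (\<forall>i\<in>{1..j}. (x#ys) ! i \<in> B) then ennreal (f ((x#ys) ! j)) else 0) \<partial>measure_pmf (walk P y n))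
        = indicator B y * (\<integral>\<^sup>+ys. (if (\<forall>i\<in>{1..k}. ys ! i \<in> B) then ennreal (f (ys ! k)) else 0) \<partial>measure_pmf (walk P y n))" .
    qed
    also have "\<dots> = (\<integral>\<^sup>+y. indicator B y * (Qop P B ^^ k) (\<lambda>y. ennreal (f y)) y \<partial>measure_pmf (P x))"
      using Suc.IH[of k] Suc.prems \<open>j = Suc k\<close> by simp
    also have "\<dots> = (Qop P B ^^ j) (\<lambda>y. ennreal (f y)) x"
      using \<open>j = Suc k\<close> by (simp add: Qop_def)
    finally show ?thesis .
  qed
qed

lemma occ_Gop: "occ P B f x = Gop P B (\<lambda>y. ennreal (f y)) x"
proof -
  have "occ P B f x = (SUP n. \<Sum>j\<le>n. (Qop P B ^^ j) (\<lambda>y. ennreal (f y)) x)"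
    unfolding occ_def
    apply (intro SUP_cong refl)
    apply (subst nn_integral_sum, simp)
    by (rule sum.cong[OF refl], rule W, simp)
  also have "\<dots> = (SUP n. \<Sum>j<Suc n. (Qop P B ^^ j) (\<lambda>y. ennreal (f y)) x)"
    by (simp add: lessThan_Suc_atMost)
  also have "\<dots> = (SUP n. \<Sum>j<n. (Qop P B ^^ j) (\<lambda>y. ennreal (f y)) x)"
    by (rule SUP_Suc_mono) (intro monoI sum_mono2, auto)
  also have "\<dots> = Gop P B (\<lambda>y. ennreal (f y)) x"
    by (simp add: Gop_def suminf_eq_SUP)
  finally show ?thesis .
qed



lemma nn_of_has_sum:
  fixes f :: "'a \<Rightarrow> real"
  assumes "\<And>x. x \<in> S \<Longrightarrow> f x \<ge> 0" "(f has_sum s) S"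
  shows "(\<integral>\<^sup>+x. ennreal (f x) \<partial>count_space S) = ennreal s"
proof -
  have "f summable_on S" using assms(2) by (auto simp: summable_on_def)
  then have "Infinite_Sum.abs_summable_on f S"
    using summable_on_iff_abs_summable_on_real by blast
  then have a: "Infinite_Set_Sum.abs_summable_on f S" using abs_summable_equivalent by blast
  have "(\<integral>\<^sup>+x. ennreal (f x) \<partial>count_space S) = ennreal (infsetsum f S)"
    using nn_integral_conv_infsetsum[OF a] assms(1) by simp
  also have "infsetsum f S = s" using infsetsum_infsum[OF a] assms(2) infsumI by metis
  finally show ?thesis .
qed

lemma has_sum_of_nn:
  fixes f :: "'a \<Rightarrow> real"
  assumes "\<And>x. x \<in> S \<Longrightarrow> f x \<ge> 0" "(\<integral>\<^sup>+x. ennreal (f x) \<partial>count_space S) = ennreal s" "s \<ge> 0"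
  shows "(f has_sum s) S"
proof -
  have "integrable (count_space S) f"
  proof (rule integrableI_bounded)
    show "f \<in> borel_measurable (count_space S)" by simp
    have "(\<integral>\<^sup>+x. ennreal (norm (f x)) \<partial>count_space S) = (\<integral>\<^sup>+x. ennreal (f x) \<partial>count_space S)"
      by (intro nn_integral_cong) (use assms(1) in auto)
    then show "(\<integral>\<^sup>+x. ennreal (norm (f x)) \<partial>count_space S) < \<infinity>" using assms(2) by simp
  qed
  then have a: "Infinite_Set_Sum.abs_summable_on f S" by (simp add: Infinite_Set_Sum.abs_summable_on_def)
  have "infsetsum f S = s"
    using infsetsum_conv_nn_integral[of S f] assms by simp
  then have "infsum f S = s" using infsetsum_infsum[OF a] by simp
  moreover have "f summable_on S"
    using a abs_summable_equivalent summable_on_iff_abs_summable_on_real by blast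
  ultimately show ?thesis using has_sum_infsum by blast
qed


lemma ennreal_suminf_head: "(\<Sum>n. f n) = f 0 + (\<Sum>n. f (Suc n) :: ennreal)"
proof -
  have "f sums ((\<Sum>n. f (Suc n)) + f 0)" by (rule sums_Suc) (rule summable_sums, simp)
  then show ?thesis by (simp add: sums_unique[symmetric] add.commute)
qed

lemma Qop_mono:
  assumes "\<And>y. y \<in> B \<Longrightarrow> u y \<le> v y"
  shows "Qop P B u x \<le> Qop P B v x"
  unfolding Qop_def
  by (intro nn_integral_mono) (use assms in \<open>auto split: split_indicator\<close>)

lemma Qpow_mono_on:
  assumes "\<And>y. y \<in> S \<Longrightarrow> u y \<le> v y" "B \<subseteq> S" "x \<in> S"
  shows "(Qop P B ^^ j) u x \<le> (Qop P B ^^ j) v x"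
  using assms(3)
proof (induction j arbitrary: x)
  case 0
  then show ?case using assms(1) by simp
next
  case (Suc j)
  show ?case using Suc.IH assms(2) by (auto intro!: Qop_mono)
qed

lemma Qpow_mono:
  assumes "\<And>y. u y \<le> v y"
  shows "(Qop P B ^^ j) u x \<le> (Qop P B ^^ j) v x"
  using Qpow_mono_on[of UNIV u v B x j P] assms by simp

lemma Gop_mono_on:
  assumes "\<And>y. y \<in> S \<Longrightarrow> u y \<le> v y" "B \<subseteq> S" "x \<in> S"
  shows "Gop P B u x \<le> Gop P B v x"
  unfolding Gop_def by (intro suminf_le Qpow_mono_on[OF assms]) auto

lemma Qop_add: "Qop P B (\<lambda>y. u y + v y) x = Qop P B u x + Qop P B v x"
  unfolding Qop_def by (simp add: distrib_left nn_integral_add)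

lemma Qop_cmult: "Qop P B (\<lambda>y. c * u y) x = c * Qop P B u x"
  unfolding Qop_def by (simp add: nn_integral_cmult mult.left_commute)

lemma Qop_sum: "Qop P B (\<lambda>y. \<Sum>j\<in>J. w j y) x = (\<Sum>j\<in>J. Qop P B (w j) x)"
  unfolding Qop_def by (simp add: sum_distrib_left nn_integral_sum)

lemma Qop_suminf: "Qop P B (\<lambda>y. \<Sum>j. w j y) x = (\<Sum>j. Qop P B (w j) x)"
  unfolding Qop_def ennreal_suminf_cmult[symmetric] by (rule nn_integral_suminf) simp

lemma Qpow_add: "(Qop P B ^^ j) (\<lambda>y. u y + v y) x = (Qop P B ^^ j) u x + (Qop P B ^^ j) v x"
proof (induction j arbitrary: x)
  case 0 then show ?case by simp
next
  case (Suc j)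
  have e: "(Qop P B ^^ j) (\<lambda>y. u y + v y) = (\<lambda>y. (Qop P B ^^ j) u y + (Qop P B ^^ j) v y)"
    by (rule ext) (rule Suc.IH)
  have "(Qop P B ^^ Suc j) (\<lambda>y. u y + v y) x = Qop P B (\<lambda>y. (Qop P B ^^ j) u y + (Qop P B ^^ j) v y) x"
    by (simp add: e)
  then show ?case by (simp add: Qop_add)
qed

lemma Gop_add: "Gop P B (\<lambda>y. u y + v y) x = Gop P B u x + Gop P B v x"
  unfolding Gop_def by (simp add: Qpow_add suminf_add)

lemma Gop_fix: "Gop P B u x = u x + Qop P B (Gop P B u) x"
proof -
  have "Gop P B u x = u x + (\<Sum>j. (Qop P B ^^ Suc j) u x)"
    unfolding Gop_def by (subst ennreal_suminf_head) simp
  also have "(\<Sum>j. (Qop P B ^^ Suc j) u x) = Qop P B (Gop P B u) x"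
    unfolding Gop_def Qop_suminf by simp
  finally show ?thesis .
qed

lemma Gop_partial_le: "(\<Sum>j<N. (Qop P B ^^ j) u x) \<le> Gop P B u x"
  unfolding Gop_def by (rule sum_le_suminf) auto

lemma Gop_SUP: "Gop P B u x = (SUP N. \<Sum>j<N. (Qop P B ^^ j) u x)"
  unfolding Gop_def by (rule suminf_eq_SUP)

lemma Gop_comparison:
  assumes "\<And>x. x \<in> B \<Longrightarrow> u x + Qop P B g x \<le> g x" "x \<in> B"
  shows "Gop P B u x \<le> g x"
proof -
  have *: "(\<Sum>j<N. (Qop P B ^^ j) u x) + (Qop P B ^^ N) g x \<le> g x" if "x \<in> B" for N x
    using that
  proof (induction N arbitrary: x)
    case 0 then show ?case by simp
  next
    case (Suc N)
    have "(\<Sum>j<Suc N. (Qop P B ^^ j) u x) + (Qop P B ^^ Suc N) g x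
        = u x + ((\<Sum>j<N. (Qop P B ^^ Suc j) u x) + (Qop P B ^^ Suc N) g x)"
      unfolding sum.lessThan_Suc_shift by (simp add: add.assoc)
    also have "(\<Sum>j<N. (Qop P B ^^ Suc j) u x) + (Qop P B ^^ Suc N) g x
        = Qop P B (\<lambda>y. (\<Sum>j<N. (Qop P B ^^ j) u y) + (Qop P B ^^ N) g y) x"
      by (simp add: Qop_add Qop_sum)
    also have "\<dots> \<le> Qop P B g x"
      by (rule Qop_mono) (rule Suc.IH)
    also have "u x + Qop P B g x \<le> g x" using assms(1) Suc.prems by simp
    finally show ?case by (simp add: add_left_mono)
  qed
  show ?thesis unfolding Gop_SUP
  proof (rule SUP_least)
    fix N
    show "(\<Sum>j<N. (Qop P B ^^ j) u x) \<le> g x"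
      using *[OF assms(2), of N] by (metis add_increasing2 order.trans zero_le order_refl)
  qed
qed

lemma Gop_resolvent:
  assumes "B1 \<subseteq> B0" "C = B0 - B1"
  shows "Gop P B0 u x \<le> Gop P B1 (\<lambda>y. u y + Qop P C (Gop P B0 u) y) x"
proof -
  define F where "F = Gop P B0 u"
  define H where "H = Gop P B1 (\<lambda>y. u y + Qop P C F y)"
  have split: "Qop P B0 w y = Qop P B1 w y + Qop P C w y" for w y
  proof -
    have "indicator B0 t * w t = indicator B1 t * w t + indicator C t * w t" for t
      using assms by (auto split: split_indicator)
    then show ?thesis unfolding Qop_def by (simp add: nn_integral_add)
  qed
  have "(\<Sum>j<N. (Qop P B0 ^^ j) u y) \<le> H y" for N y
  proof (induction N arbitrary: y)
    case 0 then show ?case by simp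
  next
    case (Suc N)
    have "(\<Sum>j<Suc N. (Qop P B0 ^^ j) u y) = u y + Qop P B0 (\<lambda>y. \<Sum>j<N. (Qop P B0 ^^ j) u y) y"
      unfolding sum.lessThan_Suc_shift by (simp add: Qop_sum)
    also have "\<dots> = u y + Qop P B1 (\<lambda>y. \<Sum>j<N. (Qop P B0 ^^ j) u y) y + Qop P C (\<lambda>y. \<Sum>j<N. (Qop P B0 ^^ j) u y) y"
      by (simp add: split add.assoc)
    also have "\<dots> \<le> u y + Qop P B1 H y + Qop P C F y"
      by (intro add_mono order_refl Qop_mono Suc.IH) (simp add: F_def Gop_partial_le)
    also have "\<dots> = H y"
      unfolding H_def using Gop_fix[of P B1 "\<lambda>y. u y + Qop P C F y" y] by (simp add: ac_simps)
    finally show ?case .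
  qed
  then show ?thesis
    unfolding H_def[symmetric] F_def[symmetric] by (simp add: F_def Gop_SUP SUP_least)
qed


lemma Qpow_lin:
  fixes P :: "'a::countable \<Rightarrow> 'a pmf"
  shows "(Qop P B ^^ j) u x = (\<integral>\<^sup>+y. u y * (Qop P B ^^ j) (indicator {y}) x \<partial>count_space UNIV)"
proof (induction j arbitrary: x)
  case 0
  have "(\<integral>\<^sup>+y. u y * indicator {y} x \<partial>count_space UNIV) = (\<integral>\<^sup>+y. u y * indicator {x} y \<partial>count_space UNIV)"
    by (intro nn_integral_cong) (simp split: split_indicator)
  also have "\<dots> = u x" by simp
  finally show ?case by simp
next
  case (Suc j)
  have e: "(Qop P B ^^ j) u = (\<lambda>w. \<integral>\<^sup>+y. u y * (Qop P B ^^ j) (indicator {y}) w \<partial>count_space UNIV)"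
    by (rule ext) (rule Suc.IH)
  have "(Qop P B ^^ Suc j) u x = Qop P B (\<lambda>w. \<integral>\<^sup>+y. u y * (Qop P B ^^ j) (indicator {y}) w \<partial>count_space UNIV) x"
    by (simp only: funpow.simps comp_def e)
  also have "\<dots> = (\<integral>\<^sup>+w. indicator B w * (\<integral>\<^sup>+y. u y * (Qop P B ^^ j) (indicator {y}) w \<partial>count_space UNIV) \<partial>measure_pmf (P x))"
    by (rule Qop_def)
  also have "\<dots> = (\<integral>\<^sup>+w. (\<integral>\<^sup>+y. u y * (indicator B w * (Qop P B ^^ j) (indicator {y}) w) \<partial>count_space UNIV) \<partial>measure_pmf (P x))"
    by (intro nn_integral_cong) (simp add: nn_integral_cmult[symmetric] ac_simps)
  also have "\<dots> = (\<integral>\<^sup>+y. (\<integral>\<^sup>+w. u y * (indicator B w * (Qop P B ^^ j) (indicator {y}) w) \<partial>measure_pmf (P x)) \<partial>count_space UNIV)"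
    by (rule nn_integral_count_space_nn_integral) auto
  also have "\<dots> = (\<integral>\<^sup>+y. u y * (Qop P B ^^ Suc j) (indicator {y}) x \<partial>count_space UNIV)"
    by (intro nn_integral_cong) (simp add: nn_integral_cmult Qop_def)
  finally show ?case .
qed

lemma Gop_lin:
  fixes P :: "'a::countable \<Rightarrow> 'a pmf"
  shows "Gop P B u x = (\<integral>\<^sup>+y. u y * Gop P B (indicator {y}) x \<partial>count_space UNIV)"
proof -
  have "Gop P B u x = (\<Sum>j. \<integral>\<^sup>+y. u y * (Qop P B ^^ j) (indicator {y}) x \<partial>count_space UNIV)"
    unfolding Gop_def by (subst Qpow_lin) (rule refl)
  also have "\<dots> = (\<integral>\<^sup>+y. (\<Sum>j. u y * (Qop P B ^^ j) (indicator {y}) x) \<partial>count_space UNIV)"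
    by (rule nn_integral_suminf[symmetric]) auto
  also have "\<dots> = (\<integral>\<^sup>+y. u y * Gop P B (indicator {y}) x \<partial>count_space UNIV)"
    unfolding Gop_def by simp
  finally show ?thesis .
qed

lemma INF_zero_of_bounded_sums:
  fixes a :: "nat \<Rightarrow> ennreal"
  assumes "\<And>N. (\<Sum>j<N. a j) \<le> C" "C < \<infinity>"
  shows "(INF N. a N) = 0"
proof (rule ccontr)
  define c where "c = (INF N. a N)"
  assume "(INF N. a N) \<noteq> 0"
  then have c0: "c > 0" unfolding c_def using not_gr_zero by blast
  have le: "of_nat N * c \<le> C" for N
  proof -
    have "of_nat N * c = (\<Sum>j<N. c)" by simp
    also have "\<dots> \<le> (\<Sum>j<N. a j)" by (intro sum_mono) (simp add: c_def INF_lower)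
    also have "\<dots> \<le> C" by (rule assms(1))
    finally show ?thesis .
  qed
  have "c \<noteq> \<infinity>" using le[of 1] assms(2) by auto
  then obtain c' where c': "c = ennreal c'" "c' > 0" using c0
    by (metis ennreal_cases ennreal_less_zero_iff infinity_ennreal_def)
  obtain C' where C': "C = ennreal C'" "C' \<ge> 0" using assms(2)
    by (metis ennreal_cases infinity_ennreal_def less_irrefl)
  obtain N :: nat where "real N > C' / c'" using reals_Archimedean2 by blast
  then have "real N * c' > C'" using c' by (simp add: field_simps)
  moreover have "ennreal (real N * c') \<le> ennreal C'" using le[of N] c' C'
    by (simp add: ennreal_mult'' ennreal_of_nat_eq_real_of_nat)
  ultimately show False using C' by (simp add: ennreal_le_iff2)
qed

definition pint :: "('a \<Rightarrow> real) \<Rightarrow> ('a \<Rightarrow> ennreal) \<Rightarrow> ennreal" where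
  "pint \<pi> u = (\<integral>\<^sup>+x. ennreal (\<pi> x) * u x \<partial>count_space UNIV)"

lemma stat_step:
  fixes P :: "'a::countable \<Rightarrow> 'a pmf"
  assumes stat: "stationary_distribution P \<pi>"
  shows "pint \<pi> u = ennreal (\<pi> z) * u z + pint \<pi> (Qop P (-{z}) u)"
proof -
  have pos: "\<pi> x \<ge> 0" for x using stat by (simp add: stationary_distribution_def)
  have st: "(\<integral>\<^sup>+x. ennreal (\<pi> x) * ennreal (pmf (P x) y) \<partial>count_space UNIV) = ennreal (\<pi> y)" for y
  proof -
    have "((\<lambda>x. \<pi> x * pmf (P x) y) has_sum \<pi> y) UNIV"
      using stat by (simp add: stationary_distribution_def)
    from nn_of_has_sum[OF _ this] pos show ?thesis by (simp add: ennreal_mult'')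
  qed
  have "pint \<pi> (Qop P (-{z}) u) = (\<integral>\<^sup>+x. \<integral>\<^sup>+w. ennreal (\<pi> x) * (ennreal (pmf (P x) w) * (indicator (-{z}) w * u w)) \<partial>count_space UNIV \<partial>count_space UNIV)"
    unfolding pint_def Qop_def nn_integral_measure_pmf
    by (intro nn_integral_cong) (simp add: nn_integral_cmult)
  also have "\<dots> = (\<integral>\<^sup>+w. \<integral>\<^sup>+x. ennreal (\<pi> x) * (ennreal (pmf (P x) w) * (indicator (-{z}) w * u w)) \<partial>count_space UNIV \<partial>count_space UNIV)"
    by (rule nn_integral_count_space_nn_integral) auto
  also have "\<dots> = (\<integral>\<^sup>+w. (indicator (-{z}) w * u w) * (\<integral>\<^sup>+x. ennreal (\<pi> x) * ennreal (pmf (P x) w) \<partial>count_space UNIV) \<partial>count_space UNIV)"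
    by (intro nn_integral_cong) (simp add: nn_integral_cmult[symmetric] ac_simps)
  also have "\<dots> = (\<integral>\<^sup>+w. ennreal (\<pi> w) * u w * indicator (-{z}) w \<partial>count_space UNIV)"
    by (simp add: st ac_simps)
  finally have 1: "pint \<pi> (Qop P (-{z}) u) = (\<integral>\<^sup>+w. ennreal (\<pi> w) * u w * indicator (-{z}) w \<partial>count_space UNIV)" .
  have "pint \<pi> u = (\<integral>\<^sup>+w. ennreal (\<pi> w) * u w * indicator {z} w + ennreal (\<pi> w) * u w * indicator (-{z}) w \<partial>count_space UNIV)"
    unfolding pint_def by (intro nn_integral_cong) (simp split: split_indicator)
  also have "\<dots> = ennreal (\<pi> z) * u z + pint \<pi> (Qop P (-{z}) u)"
    by (simp add: nn_integral_add 1)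
  finally show ?thesis .
qed

lemma stat_iter:
  fixes P :: "'a::countable \<Rightarrow> 'a pmf"
  assumes stat: "stationary_distribution P \<pi>"
  shows "pint \<pi> u = ennreal (\<pi> z) * (\<Sum>j<N. (Qop P (-{z}) ^^ j) u z) + pint \<pi> ((Qop P (-{z}) ^^ N) u)"
proof (induction N)
  case 0 then show ?case by simp
next
  case (Suc N)
  show ?case
    using Suc stat_step[OF stat, of "(Qop P (-{z}) ^^ N) u" z]
    by (simp add: distrib_left add.assoc)
qed

lemma regen:
  fixes P :: "'a::countable \<Rightarrow> 'a pmf"
  assumes stat: "stationary_distribution P \<pi>"
    and fin: "\<And>x. Gop P (-{z}) (\<lambda>_. 1) x < \<infinity>"
  shows "ennreal (\<pi> y) = ennreal (\<pi> z) * Gop P (-{z}) (indicator {y}) z"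
proof -
  let ?Q = "Qop P (-{z})"
  have pos: "\<pi> x \<ge> 0" for x using stat by (simp add: stationary_distribution_def)
  have tot: "pint \<pi> (\<lambda>_. 1) = 1"
  proof -
    have "((\<lambda>x. \<pi> x) has_sum 1) UNIV" using stat by (simp add: stationary_distribution_def)
    from nn_of_has_sum[OF _ this] pos show ?thesis by (simp add: pint_def)
  qed
  have py: "pint \<pi> (indicator {y}) = ennreal (\<pi> y)"
  proof -
    have "pint \<pi> (indicator {y}) = (\<integral>\<^sup>+x. ennreal (\<pi> x) * indicator {y} x \<partial>count_space UNIV)"
      by (simp add: pint_def)
    also have "\<dots> = ennreal (\<pi> y)" by simp
    finally show ?thesis .
  qed
  have Q1: "?Q (\<lambda>_. 1) x \<le> 1" for x
  proof -
    have "?Q (\<lambda>_. 1) x \<le> (\<integral>\<^sup>+w. 1 \<partial>measure_pmf (P x))"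
      unfolding Qop_def by (intro nn_integral_mono) (simp split: split_indicator)
    also have "\<dots> = 1" by simp
    finally show ?thesis .
  qed
  have dec: "(?Q ^^ Suc N) (\<lambda>_. 1) x \<le> (?Q ^^ N) (\<lambda>_. 1) x" for N x
  proof -
    have "(?Q ^^ Suc N) (\<lambda>_. 1) x = (?Q ^^ N) (?Q (\<lambda>_. 1)) x" by (simp add: funpow_Suc_right del: funpow.simps)
    also have "\<dots> \<le> (?Q ^^ N) (\<lambda>_. 1) x" by (rule Qpow_mono) (rule Q1)
    finally show ?thesis .
  qed
  have decseq: "decseq (\<lambda>N. (?Q ^^ N) (\<lambda>_. 1))"
    by (intro decseq_SucI le_funI dec)
  have inf0: "(INF N. (?Q ^^ N) (\<lambda>_. 1) x) = 0" for x
    by (rule INF_zero_of_bounded_sums[OF Gop_partial_le fin])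
  have "(INF N. pint \<pi> ((?Q ^^ N) (\<lambda>_. 1))) = 0"
  proof -
    have "(\<integral>\<^sup>+ x. (INF N. ennreal (\<pi> x) * (?Q ^^ N) (\<lambda>_. 1) x) \<partial>count_space UNIV) = (INF N. \<integral>\<^sup>+ x. ennreal (\<pi> x) * (?Q ^^ N) (\<lambda>_. 1) x \<partial>count_space UNIV)"
    proof (rule nn_integral_monotone_convergence_INF_decseq)
      show "decseq (\<lambda>N x. ennreal (\<pi> x) * (?Q ^^ N) (\<lambda>_. 1) x)"
      proof (rule decseq_SucI, rule le_funI)
        fix N x show "ennreal (\<pi> x) * (?Q ^^ Suc N) (\<lambda>_. 1) x \<le> ennreal (\<pi> x) * (?Q ^^ N) (\<lambda>_. 1) x"
          by (intro mult_left_mono dec) simp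
      qed
      fix N
      show "(\<lambda>x. ennreal (\<pi> x) * (?Q ^^ N) (\<lambda>_. 1) x) \<in> borel_measurable (count_space UNIV)" by simp
      have "(\<integral>\<^sup>+ x. ennreal (\<pi> x) * (?Q ^^ N) (\<lambda>_. 1) x \<partial>count_space UNIV) \<le> pint \<pi> (\<lambda>_. 1)"
        unfolding pint_def
      proof (intro nn_integral_mono mult_left_mono)
        fix x
        show "(?Q ^^ N) (\<lambda>_. 1) x \<le> 1"
        proof (induction N)
          case (Suc N) then show ?case using dec[of N x] by simp
        qed simp
      qed simp
      then show "(\<integral>\<^sup>+ x. ennreal (\<pi> x) * (?Q ^^ N) (\<lambda>_. 1) x \<partial>count_space UNIV) < \<infinity>"
        using tot by (simp add: order.strict_trans1)
    qed
    moreover have "(INF N. ennreal (\<pi> x) * (?Q ^^ N) (\<lambda>_. 1) x) = 0" for x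
    proof (rule INF_zero_of_bounded_sums)
      fix N
      show "(\<Sum>j<N. ennreal (\<pi> x) * (?Q ^^ j) (\<lambda>_. 1) x) \<le> ennreal (\<pi> x) * Gop P (-{z}) (\<lambda>_. 1) x"
        by (simp add: sum_distrib_left[symmetric] mult_left_mono Gop_partial_le)
      show "ennreal (\<pi> x) * Gop P (-{z}) (\<lambda>_. 1) x < \<infinity>"
        using fin[of x] by (simp add: ennreal_mult_less_top)
    qed
    ultimately show ?thesis unfolding pint_def by simp
  qed
  then have rem0: "(INF N. pint \<pi> ((?Q ^^ N) (\<lambda>_. 1))) = 0"
    by (simp add: pint_def)
  show ?thesis
  proof (rule antisym)
    show "ennreal (\<pi> z) * Gop P (-{z}) (indicator {y}) z \<le> ennreal (\<pi> y)"
      unfolding Gop_SUP SUP_mult_left_ennreal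
    proof (rule SUP_least)
      fix N
      show "ennreal (\<pi> z) * (\<Sum>j<N. (?Q ^^ j) (indicator {y}) z) \<le> ennreal (\<pi> y)"
        using stat_iter[OF stat, of "indicator {y}" z N] py by (metis le_iff_add)
    qed
    have "ennreal (\<pi> y) \<le> ennreal (\<pi> z) * Gop P (-{z}) (indicator {y}) z + pint \<pi> ((?Q ^^ N) (\<lambda>_. 1))" for N
    proof -
      have "ennreal (\<pi> y) = ennreal (\<pi> z) * (\<Sum>j<N. (?Q ^^ j) (indicator {y}) z) + pint \<pi> ((?Q ^^ N) (indicator {y}))"
        using stat_iter[OF stat, of "indicator {y}" z N] py by simp
      also have "\<dots> \<le> ennreal (\<pi> z) * Gop P (-{z}) (indicator {y}) z + pint \<pi> ((?Q ^^ N) (\<lambda>_. 1))"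
        unfolding pint_def
        by (intro add_mono mult_left_mono Gop_partial_le nn_integral_mono Qpow_mono)
           (auto split: split_indicator)
      finally show ?thesis .
    qed
    then have "ennreal (\<pi> y) \<le> (INF N. ennreal (\<pi> z) * Gop P (-{z}) (indicator {y}) z + pint \<pi> ((?Q ^^ N) (\<lambda>_. 1)))"
      by (rule INF_greatest)
    also have "\<dots> = ennreal (\<pi> z) * Gop P (-{z}) (indicator {y}) z + (INF N. pint \<pi> ((?Q ^^ N) (\<lambda>_. 1)))"
      by (rule INF_ennreal_const_add)
    finally show "ennreal (\<pi> y) \<le> ennreal (\<pi> z) * Gop P (-{z}) (indicator {y}) z" using rem0 by simp
  qed
qed



definition Top :: "('a \<Rightarrow> 'a pmf) \<Rightarrow> 'a set \<Rightarrow> ('a \<Rightarrow> real) \<Rightarrow> 'a \<Rightarrow> real" where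
  "Top P A' v x = (\<Sum>y\<in>A'. pmf (P x) y * v y)"

lemma pmf_sum_le1: "finite S \<Longrightarrow> (\<Sum>y\<in>S. pmf p y) \<le> 1"
  by (metis measure_measure_pmf_finite measure_pmf.prob_le_1)

lemma Qop_Top:
  assumes "finite A'" "\<And>y. y \<in> A' \<Longrightarrow> v y \<ge> 0"
  shows "Qop P A' (\<lambda>y. ennreal (v y)) x = ennreal (Top P A' v x)"
proof -
  have "Qop P A' (\<lambda>y. ennreal (v y)) x = (\<integral>\<^sup>+y. ennreal (pmf (P x) y) * ennreal (v y) * indicator A' y \<partial>count_space UNIV)"
    unfolding Qop_def nn_integral_measure_pmf by (intro nn_integral_cong) (simp add: ac_simps)
  also have "\<dots> = (\<Sum>y\<in>A'. ennreal (pmf (P x) y) * ennreal (v y))"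
    using assms(1) by (subst nn_integral_indicator_finite) auto
  also have "\<dots> = (\<Sum>y\<in>A'. ennreal (pmf (P x) y * v y))"
    by (intro sum.cong refl) (subst ennreal_mult, auto simp: assms(2))
  also have "\<dots> = ennreal (Top P A' v x)"
    unfolding Top_def using assms(2) by (intro sum_ennreal) simp
  finally show ?thesis .
qed

lemma Top_nonneg: "(\<And>y. y \<in> A' \<Longrightarrow> v y \<ge> 0) \<Longrightarrow> Top P A' v x \<ge> 0"
  unfolding Top_def by (intro sum_nonneg) auto

lemma Toppow_nonneg: "(\<And>y. y \<in> A' \<Longrightarrow> v y \<ge> 0) \<Longrightarrow> y \<in> A' \<Longrightarrow> (Top P A' ^^ j) v y \<ge> 0"
  by (induction j arbitrary: y) (auto intro: Top_nonneg)

lemma Qpow_Top: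
  assumes "finite A'" "\<And>y. y \<in> A' \<Longrightarrow> v y \<ge> 0"
  shows "(Qop P A' ^^ j) (\<lambda>y. ennreal (v y)) x = ennreal ((Top P A' ^^ j) v x)"
proof (induction j arbitrary: x)
  case 0 then show ?case by simp
next
  case (Suc j)
  have e: "(Qop P A' ^^ j) (\<lambda>y. ennreal (v y)) = (\<lambda>y. ennreal ((Top P A' ^^ j) v y))"
    by (rule ext) (rule Suc.IH)
  have nn: "\<And>y. y \<in> A' \<Longrightarrow> 0 \<le> (Top P A' ^^ j) v y"
    by (rule Toppow_nonneg[where A'=A' and v=v]) (use assms(2) in auto)
  show ?case
    using Qop_Top[OF assms(1), of "(Top P A' ^^ j) v" P x] nn
    by (simp add: e)
qed

lemma Top_cong: "(\<And>y. y \<in> A' \<Longrightarrow> u y = u' y) \<Longrightarrow> Top P A' u x = Top P A' u' x"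
  unfolding Top_def by (intro sum.cong) auto

lemma Top_cmult: "Top P A' (\<lambda>y. a * u y) x = a * Top P A' u x"
  unfolding Top_def by (simp add: sum_distrib_left ac_simps)

lemma Toppow_cong: "(\<And>y. y \<in> A' \<Longrightarrow> u y = u' y) \<Longrightarrow> x \<in> A' \<or> j > 0 \<Longrightarrow> (Top P A' ^^ j) u x = (Top P A' ^^ j) u' x"
proof (induction j arbitrary: x)
  case 0 then show ?case by simp
next
  case (Suc j)
  have "(Top P A' ^^ j) u y = (Top P A' ^^ j) u' y" if "y \<in> A'" for y
    using Suc.IH[of y] Suc.prems(1) that by blast
  then have "Top P A' ((Top P A' ^^ j) u) x = Top P A' ((Top P A' ^^ j) u') x"
    by (rule Top_cong)
  then show ?case by simp
qed

lemma Top_diff: "Top P A' (\<lambda>y. u y - v y) x = Top P A' u x - Top P A' v x"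
  unfolding Top_def by (simp add: right_diff_distrib sum_subtractf)

lemma Toppow_diff: "(Top P A' ^^ j) (\<lambda>y. u y - v y) x = (Top P A' ^^ j) u x - (Top P A' ^^ j) v x"
proof (induction j arbitrary: x)
  case 0 then show ?case by simp
next
  case (Suc j)
  have e: "(Top P A' ^^ j) (\<lambda>y. u y - v y) = (\<lambda>y. (Top P A' ^^ j) u y - (Top P A' ^^ j) v y)"
    by (rule ext) (rule Suc.IH)
  show ?case by (simp add: e Top_diff)
qed

lemma Top_sum: "Top P A' (\<lambda>y. \<Sum>j\<in>J. w j y) x = (\<Sum>j\<in>J. Top P A' (w j) x)"
  unfolding Top_def by (simp add: sum_distrib_left sum.swap[of _ A'])

lemma Toppow_bound:
  assumes "finite A'" "\<And>y. y \<in> A' \<Longrightarrow> \<bar>v y\<bar> \<le> c" "x \<in> A'"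
  shows "\<bar>(Top P A' ^^ j) v x\<bar> \<le> c"
  using assms(3)
proof (induction j arbitrary: x)
  case 0 then show ?case using assms(2) by simp
next
  case (Suc j)
  have c0: "c \<ge> 0" using assms(2)[OF Suc.prems] by linarith
  have "\<bar>(Top P A' ^^ Suc j) v x\<bar> \<le> (\<Sum>y\<in>A'. pmf (P x) y * \<bar>(Top P A' ^^ j) v y\<bar>)"
    by (simp add: Top_def) (rule order_trans[OF sum_abs], simp add: abs_mult)
  also have "\<dots> \<le> (\<Sum>y\<in>A'. pmf (P x) y * c)"
    by (intro sum_mono mult_left_mono Suc.IH) auto
  also have "\<dots> = (\<Sum>y\<in>A'. pmf (P x) y) * c" by (simp add: sum_distrib_right)
  also have "\<dots> \<le> 1 * c" by (intro mult_right_mono pmf_sum_le1 assms(1) c0)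
  finally show ?case by simp
qed

lemma G1_beta:
  fixes P :: "'a \<Rightarrow> 'a pmf"
  assumes A: "finite A" "z \<in> A" and inv: "IminusP22_invertible P (A - {z})"
    and hpos: "\<And>x. x \<in> A \<Longrightarrow> h x \<ge> 0"
  shows "Gop P (A - {z}) (\<lambda>y. ennreal (h y)) z = ennreal (beta P A z h) \<and> beta P A z h \<ge> 0"
proof -
  define A' where "A' = A - {z}"
  have finA': "finite A'" using A by (simp add: A'_def)
  let ?T = "Top P A'"
  define v where "v = inv_into (extensional A') (IminusP22 P A') (restrict h A')"
  have bij: "bij_betw (IminusP22 P A') (extensional A') (extensional A')"
    using inv by (simp add: IminusP22_invertible_def A'_def)
  have inj: "inj_on (IminusP22 P A') (extensional A')" using bij by (rule bij_betw_imp_inj_on)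
  have hext: "restrict h A' \<in> IminusP22 P A' ` extensional A'"
    using bij by (simp add: bij_betw_def)
  have vext: "v \<in> extensional A'" unfolding v_def by (rule inv_into_into[OF hext])
  have vsol: "IminusP22 P A' v = restrict h A'" unfolding v_def by (rule f_inv_into_f[OF hext])
  have vh: "v x - ?T v x = h x" if "x \<in> A'" for x
    using fun_cong[OF vsol, of x] that by (simp add: IminusP22_def Top_def)
  have hA': "h y \<ge> 0" if "y \<in> A'" for y using hpos that by (simp add: A'_def)
  have uniq: "u = v" if "u \<in> extensional A'" "\<And>x. x \<in> A' \<Longrightarrow> u x - ?T u x = h x" for u
  proof -
    have "IminusP22 P A' u = restrict h A'"
      using that(2) by (auto simp: IminusP22_def Top_def restrict_def)
    then show ?thesis using inj vext that(1) vsol by (metis inj_on_def)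
  qed
  define c where "c = (\<Sum>y\<in>A'. \<bar>v y\<bar>)"
  have vc: "\<bar>v y\<bar> \<le> c" if "y \<in> A'" for y
    unfolding c_def using finA' that by (intro member_le_sum) auto
  have wN: "(\<Sum>j<N. (?T ^^ j) h x) = v x - (?T ^^ N) v x" if "x \<in> A'" for N x
  proof -
    define e where "e = restrict (\<lambda>x. 2 * v x - (\<Sum>j<N. (?T ^^ j) h x) - (?T ^^ N) v x) A'"
    have Te: "?T e x = 2 * ?T v x - (\<Sum>j<N. (?T ^^ Suc j) h x) - (?T ^^ Suc N) v x" for x
    proof -
      have "?T e x = ?T (\<lambda>y. 2 * v y - (\<Sum>j<N. (?T ^^ j) h y) - (?T ^^ N) v y) x"
        unfolding e_def by (rule Top_cong) auto
      also have "\<dots> = 2 * ?T v x - (\<Sum>j<N. (?T ^^ Suc j) h x) - (?T ^^ Suc N) v x"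
        by (simp add: Top_diff Top_sum Top_cmult)
      finally show ?thesis .
    qed
    have "e = v"
    proof (rule uniq)
      show "e \<in> extensional A'" by (simp add: e_def)
      fix x assume x: "x \<in> A'"
      have tel: "(\<Sum>j<N. (?T ^^ j) h x) - (\<Sum>j<N. (?T ^^ Suc j) h x) = h x - (?T ^^ N) h x"
        using sum_lessThan_telescope'[of "\<lambda>j. (?T ^^ j) h x" N] by (simp add: sum_subtractf)
      have "(?T ^^ N) v x - (?T ^^ Suc N) v x = (?T ^^ N) (\<lambda>y. v y - ?T v y) x"
        by (simp add: Toppow_diff funpow_Suc_right del: funpow.simps)
      also have "\<dots> = (?T ^^ N) h x"
        by (rule Toppow_cong) (use vh x in auto)
      finally have "(?T ^^ N) v x - (?T ^^ Suc N) v x = (?T ^^ N) h x" .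
      then show "e x - ?T e x = h x"
        using x Te[of x] tel vh[OF x] by (simp add: e_def)
    qed
    then have "e x = v x" by simp
    then show ?thesis using that by (simp add: e_def)
  qed
  have Tj_nonneg: "(?T ^^ j) h y \<ge> 0" if "y \<in> A'" for j y
    by (rule Toppow_nonneg[where A'=A' and v=h]) (use hA' that in auto)
  have summ: "summable (\<lambda>j. (?T ^^ j) h x)" if "x \<in> A'" for x
  proof (rule summableI_nonneg_bounded)
    show "0 \<le> (?T ^^ j) h x" for j using Tj_nonneg that by blast
    show "(\<Sum>j<N. (?T ^^ j) h x) \<le> v x + c" for N
    proof -
      have "\<bar>(?T ^^ N) v x\<bar> \<le> c"
        by (rule Toppow_bound[where A'=A' and v=v and c=c and x=x]) (use finA' vc that in auto)
      then show ?thesis using wN[OF that, of N] by linarith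
    qed
  qed
  define W where "W = restrict (\<lambda>x. \<Sum>j. (?T ^^ j) h x) A'"
  have TW: "?T W x = (\<Sum>j. (?T ^^ Suc j) h x)" for x
  proof -
    have "(\<Sum>j. (?T ^^ Suc j) h x) = (\<Sum>j. \<Sum>y\<in>A'. pmf (P x) y * (?T ^^ j) h y)"
      by (simp add: Top_def)
    also have "\<dots> = (\<Sum>y\<in>A'. \<Sum>j. pmf (P x) y * (?T ^^ j) h y)"
      by (rule suminf_sum) (intro summable_mult summ, assumption)
    also have "\<dots> = (\<Sum>y\<in>A'. pmf (P x) y * W y)"
      by (intro sum.cong refl) (simp add: W_def suminf_mult summ)
    also have "\<dots> = ?T W x"
      by (simp only: Top_def)
    finally show ?thesis by simp
  qed
  have sumSuc: "summable (\<lambda>j. (?T ^^ Suc j) h x)" for x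
    by (simp add: Top_def) (intro summable_sum summable_mult summ, assumption)
  have Wv: "W = v"
  proof (rule uniq)
    show "W \<in> extensional A'" by (simp add: W_def)
    fix x assume x: "x \<in> A'"
    have "W x = h x + (\<Sum>j. (?T ^^ Suc j) h x)"
      using suminf_split_head[OF summ[OF x]] x by (simp add: W_def)
    then show "W x - ?T W x = h x" by (simp add: TW)
  qed
  have Gz: "Gop P A' (\<lambda>y. ennreal (h y)) z = ennreal (h z) + ennreal (?T W z)"
  proof -
    have "Gop P A' (\<lambda>y. ennreal (h y)) z = (\<Sum>j. ennreal ((?T ^^ j) h z))"
      unfolding Gop_def by (simp add: Qpow_Top[OF finA' hA'])
    also have "\<dots> = ennreal (h z) + (\<Sum>j. ennreal ((?T ^^ Suc j) h z))"
      by (subst ennreal_suminf_head) simp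
    also have "(\<Sum>j. ennreal ((?T ^^ Suc j) h z)) = ennreal (\<Sum>j. (?T ^^ Suc j) h z)"
    proof (rule suminf_ennreal2[OF _ sumSuc])
      fix j show "0 \<le> (?T ^^ Suc j) h z"
        using Tj_nonneg hA' by (simp add: Top_nonneg)
    qed
    finally show ?thesis by (simp add: TW)
  qed
  have vpos: "v y \<ge> 0" if "y \<in> A'" for y
    using that by (simp add: Wv[symmetric] W_def suminf_nonneg summ Tj_nonneg)
  have beta_eq: "beta P A z h = h z + ?T v z"
    by (simp add: beta_def A'_def[symmetric] v_def[symmetric] Top_def Let_def)
  have Tvpos: "?T v z \<ge> 0" by (rule Top_nonneg) (rule vpos)
  have "h z \<ge> 0" using hpos A by simp
  then have "ennreal (h z) + ennreal (?T v z) = ennreal (beta P A z h)"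
    using Tvpos beta_eq by (simp add: ennreal_plus)
  then have "Gop P A' (\<lambda>y. ennreal (h y)) z = ennreal (beta P A z h)"
    using Gz Wv by simp
  moreover have "beta P A z h \<ge> 0" using beta_eq Tvpos \<open>h z \<ge> 0\<close> by simp
  ultimately show ?thesis unfolding A'_def by simp
qed


lemma final_alg:
  fixes a t b1 b2 kr kp km mp mm :: real
  assumes "a \<ge> 1" "a \<le> t" "t \<le> a + b2" "b1 \<ge> 0"
    "0 \<le> kp" "kp \<le> kr" "0 \<le> km" "km \<le> kr"
    "kp \<le> mp" "mp \<le> kp + b1" "km \<le> mm" "mm \<le> km + b1"
  shows "\<bar>(kp - km) / a - (mp - mm) / t\<bar> \<le> 2 * max (b1 / a) (kr / a * (b2 / a))"
proof -
  define d where "d = t - a"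
  define k where "k = kp - km"
  define e where "e = (mp - kp) - (mm - km)"
  have t0: "t > 0" using assms by linarith
  have a0: "a > 0" using assms by linarith
  have eq: "(kp - km) / a - (mp - mm) / t = (k * d - a * e) / (a * t)"
    unfolding d_def k_def e_def using t0 a0 by (simp add: field_simps)
  have "\<bar>k\<bar> \<le> kr" "\<bar>e\<bar> \<le> b1" "0 \<le> d" "d \<le> b2"
    using assms unfolding k_def e_def d_def by auto
  then have num: "\<bar>k * d - a * e\<bar> \<le> kr * b2 + a * b1"
  proof -
    have "\<bar>k * d\<bar> \<le> kr * b2"
      using \<open>\<bar>k\<bar> \<le> kr\<close> \<open>0 \<le> d\<close> \<open>d \<le> b2\<close> by (simp add: abs_mult mult_mono)
    moreover have "\<bar>a * e\<bar> \<le> a * b1" using \<open>\<bar>e\<bar> \<le> b1\<close> a0 by (simp add: abs_mult)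
    ultimately show ?thesis by (smt (verit))
  qed
  have "\<bar>(k * d - a * e) / (a * t)\<bar> = \<bar>k * d - a * e\<bar> / (a * t)" using a0 t0 by simp
  also have "\<dots> \<le> (kr * b2 + a * b1) / (a * t)"
    using num a0 t0 by (simp add: divide_right_mono)
  also have "\<dots> \<le> (kr * b2 + a * b1) / (a * a)"
  proof (rule divide_left_mono)
    show "0 \<le> kr * b2 + a * b1" using num by linarith
    show "a * a \<le> a * t" using assms a0 by simp
    show "0 < a * t * (a * a)" using a0 t0 by simp
  qed
  also have "\<dots> = b1 / a + kr / a * (b2 / a)" using a0 by (simp add: field_simps)
  also have "\<dots> \<le> 2 * max (b1 / a) (kr / a * (b2 / a))" by linarith
  finally show ?thesis using eq by simp
qed


lemma Qop_infsum:
  assumes "\<And>y. y \<in> S \<Longrightarrow> g y \<ge> 0" "(\<lambda>y. pmf (P x) y * g y) summable_on S"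
  shows "Qop P S (\<lambda>y. ennreal (g y)) x = ennreal (\<Sum>\<^sub>\<infinity>y\<in>S. pmf (P x) y * g y)"
proof -
  have "Qop P S (\<lambda>y. ennreal (g y)) x = (\<integral>\<^sup>+y. ennreal (pmf (P x) y * g y) * indicator S y \<partial>count_space UNIV)"
    unfolding Qop_def nn_integral_measure_pmf
    by (intro nn_integral_cong) (auto simp: ennreal_mult assms(1) split: split_indicator)
  also have "\<dots> = (\<integral>\<^sup>+y. ennreal (pmf (P x) y * g y) \<partial>count_space S)"
    by (rule nn_integral_count_space_indicator[symmetric]) simp
  also have "\<dots> = ennreal (\<Sum>\<^sub>\<infinity>y\<in>S. pmf (P x) y * g y)"
    by (rule nn_of_has_sum) (use assms in auto)
  finally show ?thesis .
qed

lemma Qpow_mono_set: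
  assumes "B1 \<subseteq> B0"
  shows "(Qop P B1 ^^ j) u x \<le> (Qop P B0 ^^ j) u x"
proof (induction j arbitrary: x)
  case 0 then show ?case by simp
next
  case (Suc j)
  have "Qop P B1 ((Qop P B1 ^^ j) u) x \<le> Qop P B1 ((Qop P B0 ^^ j) u) x"
    by (rule Qop_mono) (rule Suc.IH)
  also have "\<dots> \<le> Qop P B0 ((Qop P B0 ^^ j) u) x"
    unfolding Qop_def using assms
    by (intro nn_integral_mono) (auto split: split_indicator)
  finally show ?case by simp
qed

lemma Gop_mono_set: "B1 \<subseteq> B0 \<Longrightarrow> Gop P B1 u x \<le> Gop P B0 u x"
  unfolding Gop_def by (intro suminf_le Qpow_mono_set) auto

lemma Qpow_zero: "(Qop P B ^^ j) (\<lambda>_. 0) = (\<lambda>_. 0)"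
  by (induction j) (auto simp: Qop_def)

lemma Gop_zero: "Gop P B (\<lambda>_. 0) x = 0"
  unfolding Gop_def by (simp add: Qpow_zero)

lemma M_le:
  assumes A: "z \<in> A"
    and G0g: "\<And>w. w \<in> -A \<Longrightarrow> Gop P (-{z}) u w \<le> ennreal (g w)"
    and gpos: "\<And>w. w \<in> -A \<Longrightarrow> g w \<ge> 0"
    and out: "\<forall>x\<in>A. (\<lambda>y. pmf (P x) y * g y) summable_on (-A) \<and>
                   (\<Sum>\<^sub>\<infinity>y\<in>-A. pmf (P x) y * g y) \<le> h x"
  shows "Gop P (-{z}) u z \<le> Gop P (A - {z}) u z + Gop P (A - {z}) (\<lambda>y. ennreal (h y)) z"
proof -
  have "Gop P (-{z}) u z \<le> Gop P (A - {z}) (\<lambda>y. u y + Qop P (-A) (Gop P (-{z}) u) y) z"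
    by (rule Gop_resolvent) (use A in auto)
  also have "\<dots> = Gop P (A - {z}) u z + Gop P (A - {z}) (Qop P (-A) (Gop P (-{z}) u)) z"
    by (rule Gop_add)
  also have "Gop P (A - {z}) (Qop P (-A) (Gop P (-{z}) u)) z \<le> Gop P (A - {z}) (\<lambda>y. ennreal (h y)) z"
  proof (rule Gop_mono_on[where S=A])
    fix y assume y: "y \<in> A"
    have "Qop P (-A) (Gop P (-{z}) u) y \<le> Qop P (-A) (\<lambda>w. ennreal (g w)) y"
      by (rule Qop_mono) (rule G0g)
    also have "\<dots> = ennreal (\<Sum>\<^sub>\<infinity>w\<in>-A. pmf (P y) w * g w)"
      by (rule Qop_infsum) (use gpos out y in auto)
    also have "\<dots> \<le> ennreal (h y)"
      using out y by (simp add: ennreal_leI)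
    finally show "Qop P (-A) (Gop P (-{z}) u) y \<le> ennreal (h y)" .
  qed (use A in auto)
  finally show ?thesis by (simp add: add_left_mono)
qed



theorem theorem4p1:
  fixes P :: "'a::countable \<Rightarrow> 'a pmf" and \<pi> :: "'a \<Rightarrow> real"
    and z :: 'a and A :: "'a set"
    and r g1 g2 h1 h2 :: "'a \<Rightarrow> real"
  assumes irred: "irreducible_chain P"
    and posrec: "positive_recurrent P"
    and stat: "stationary_distribution P \<pi>"
    and A: "finite A" "z \<in> A"
    and inv: "IminusP22_invertible P (A - {z})"
    and r_nonneg: "\<forall>x. r x \<ge> 0"
    and g_nonneg: "\<forall>x\<in>-{z}. g1 x \<ge> 0 \<and> g2 x \<ge> 0"
    and h_nonneg: "\<forall>x\<in>A. h1 x \<ge> 0 \<and> h2 x \<ge> 0"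
    and drift1: "\<forall>x\<in>-{z}. (\<lambda>y. pmf (P x) y * g1 y) summable_on (-{z}) \<and>
                   (\<Sum>\<^sub>\<infinity>y\<in>-{z}. pmf (P x) y * g1 y) \<le> g1 x - r x"
    and drift2: "\<forall>x\<in>-{z}. (\<lambda>y. pmf (P x) y * g2 y) summable_on (-{z}) \<and>
                   (\<Sum>\<^sub>\<infinity>y\<in>-{z}. pmf (P x) y * g2 y) \<le> g2 x - 1"
    and out1: "\<forall>x\<in>A. (\<lambda>y. pmf (P x) y * g1 y) summable_on (-A) \<and>
                   (\<Sum>\<^sub>\<infinity>y\<in>-A. pmf (P x) y * g1 y) \<le> h1 x"
    and out2: "\<forall>x\<in>A. (\<lambda>y. pmf (P x) y * g2 y) summable_on (-A) \<and>
                   (\<Sum>\<^sub>\<infinity>y\<in>-A. pmf (P x) y * g2 y) \<le> h2 x"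
  shows "let \<kappa> = (\<lambda>f. enn2real (occ P (A - {z}) f z));
             \<pi>t = (\<lambda>f. \<kappa> f / \<kappa> (\<lambda>_. 1));
             \<pi>s = (\<lambda>x. \<pi>t (\<lambda>y. if y = x then 1 else 0))
         in rtv r \<pi>s \<pi> \<le> 2 * max (beta P A z h1 / \<kappa> (\<lambda>_. 1))
                                     (\<pi>t r * (beta P A z h2 / \<kappa> (\<lambda>_. 1)))"
proof -
  define A' where "A' = A - {z}"
  define K where "K = (\<lambda>f. Gop P A' (\<lambda>y. ennreal (f y)) z)"
  define M where "M = (\<lambda>f. Gop P (-{z}) (\<lambda>y. ennreal (f y)) z)"
  have occK: "occ P A' f z = K f" for f by (simp add: K_def occ_Gop)
  have pos: "\<pi> x \<ge> 0" for x using stat by (simp add: stationary_distribution_def)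
  have G0r: "Gop P (-{z}) (\<lambda>y. ennreal (r y)) w \<le> ennreal (g1 w)" if "w \<in> -{z}" for w
  proof (rule Gop_comparison[OF _ that])
    fix x assume x: "x \<in> -{z}"
    have "Qop P (-{z}) (\<lambda>y. ennreal (g1 y)) x = ennreal (\<Sum>\<^sub>\<infinity>y\<in>-{z}. pmf (P x) y * g1 y)"
      by (rule Qop_infsum) (use g_nonneg drift1 x in auto)
    moreover have "(\<Sum>\<^sub>\<infinity>y\<in>-{z}. pmf (P x) y * g1 y) \<ge> 0"
      by (rule infsum_nonneg) (use g_nonneg in auto)
    moreover have le: "r x + (\<Sum>\<^sub>\<infinity>y\<in>-{z}. pmf (P x) y * g1 y) \<le> g1 x"
      using drift1 x by force
    ultimately show "ennreal (r x) + Qop P (-{z}) (\<lambda>y. ennreal (g1 y)) x \<le> ennreal (g1 x)"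
      using r_nonneg by (simp add: ennreal_plus[symmetric] ennreal_leI del: ennreal_plus)
  qed
  have G01: "Gop P (-{z}) (\<lambda>_. 1) w \<le> ennreal (g2 w)" if "w \<in> -{z}" for w
  proof (rule Gop_comparison[OF _ that])
    fix x assume x: "x \<in> -{z}"
    define s where "s = (\<Sum>\<^sub>\<infinity>y\<in>-{z}. pmf (P x) y * g2 y)"
    have q: "Qop P (-{z}) (\<lambda>y. ennreal (g2 y)) x = ennreal s"
      unfolding s_def by (rule Qop_infsum) (use g_nonneg drift2 x in auto)
    have s0: "s \<ge> 0" unfolding s_def
      by (rule infsum_nonneg) (use g_nonneg in auto)
    have le: "1 + s \<le> g2 x" using drift2 x unfolding s_def by force
    have "1 + Qop P (-{z}) (\<lambda>y. ennreal (g2 y)) x = ennreal (1 + s)"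
      using q s0 by (simp add: ennreal_plus)
    also have "\<dots> \<le> ennreal (g2 x)" using le by (rule ennreal_leI)
    finally show "1 + Qop P (-{z}) (\<lambda>y. ennreal (g2 y)) x \<le> ennreal (g2 x)" .
  qed
  have fin: "Gop P (-{z}) (\<lambda>_. 1) x < \<infinity>" for x
  proof (cases "x = z")
    case True
    have "occ P (- {z}) (\<lambda>_. 1) z < \<infinity>" using posrec by (simp add: positive_recurrent_def)
    then show ?thesis using True by (simp add: occ_Gop)
  next
    case False
    then show ?thesis using G01[of x] by (simp add: order.strict_trans1)
  qed
  have reg: "ennreal (\<pi> y) = ennreal (\<pi> z) * Gop P (-{z}) (indicator {y}) z" for y
    by (rule regen[OF stat fin])
  have pintM: "pint \<pi> u = ennreal (\<pi> z) * Gop P (-{z}) u z" for u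
  proof -
    have "pint \<pi> u = (\<integral>\<^sup>+y. ennreal (\<pi> z) * (u y * Gop P (-{z}) (indicator {y}) z) \<partial>count_space UNIV)"
      unfolding pint_def
    proof (intro nn_integral_cong)
      fix y show "ennreal (\<pi> y) * u y = ennreal (\<pi> z) * (u y * Gop P (-{z}) (indicator {y}) z)"
        by (subst reg[of y]) (simp add: ac_simps)
    qed
    also have "\<dots> = ennreal (\<pi> z) * Gop P (-{z}) u z"
      by (simp add: nn_integral_cmult Gop_lin[of P "-{z}" u z])
    finally show ?thesis .
  qed
  have hb1: "Gop P A' (\<lambda>y. ennreal (h1 y)) z = ennreal (beta P A z h1)" "beta P A z h1 \<ge> 0"
    using G1_beta[OF A inv, of h1] h_nonneg by (auto simp: A'_def)
  have hb2: "Gop P A' (\<lambda>y. ennreal (h2 y)) z = ennreal (beta P A z h2)" "beta P A z h2 \<ge> 0"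
    using G1_beta[OF A inv, of h2] h_nonneg by (auto simp: A'_def)
  have Kr: "K r = ennreal (beta P A z r)" "beta P A z r \<ge> 0"
    using G1_beta[OF A inv, of r] r_nonneg by (auto simp: A'_def K_def)
  have K1: "K (\<lambda>_. 1) = ennreal (beta P A z (\<lambda>_. 1))" "beta P A z (\<lambda>_. 1) \<ge> 0"
    using G1_beta[OF A inv, of "\<lambda>_. 1"] by (auto simp: A'_def K_def)
  have K1ge: "K (\<lambda>_. 1) \<ge> 1"
    using Gop_partial_le[where N=1 and P=P and B=A' and u="\<lambda>y. ennreal 1" and x=z] by (simp add: K_def)
  have M1: "M (\<lambda>_. 1) \<le> K (\<lambda>_. 1) + ennreal (beta P A z h2)"
  proof -
    have "M (\<lambda>_. 1) \<le> K (\<lambda>_. 1) + Gop P A' (\<lambda>y. ennreal (h2 y)) z"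
      unfolding M_def K_def A'_def
    proof (rule M_le[OF A(2) _ _ out2])
      fix w assume w: "w \<in> -A"
      then have "w \<in> -{z}" using A by auto
      then show "Gop P (-{z}) (\<lambda>y. ennreal 1) w \<le> ennreal (g2 w)" using G01 by simp
      show "g2 w \<ge> 0" using g_nonneg \<open>w \<in> -{z}\<close> by auto
    qed
    then show ?thesis using hb2 by simp
  qed
  have KM1: "K (\<lambda>_. 1) \<le> M (\<lambda>_. 1)"
    unfolding K_def M_def A'_def by (rule Gop_mono_set) auto
  define a where "a = enn2real (K (\<lambda>_. 1))"
  define t where "t = enn2real (M (\<lambda>_. 1))"
  define kr where "kr = enn2real (K r)"
  define b1 where "b1 = beta P A z h1"
  define b2 where "b2 = beta P A z h2"
  have Ka: "K (\<lambda>_. 1) = ennreal a" using K1 by (simp add: a_def)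
  have a1: "a \<ge> 1" using K1ge Ka by (simp add: ennreal_le_iff2)
  have b2pos: "b2 \<ge> 0" using hb2 by (simp add: b2_def)
  have M1': "M (\<lambda>_. 1) \<le> ennreal (a + b2)"
    using M1 Ka a1 b2pos by (simp add: b2_def ennreal_plus)
  have fM: "M (\<lambda>_. 1) < \<infinity>" using M1' by (simp add: order.strict_trans1)
  have Mt1: "M (\<lambda>_. 1) = ennreal t" using fM by (simp add: t_def less_top)
  have Mt: "M (\<lambda>_. 1) = ennreal t" "t \<ge> a" "t \<le> a + b2"
  proof -
    show "M (\<lambda>_. 1) = ennreal t" by (rule Mt1)
    have t0: "t \<ge> 0" by (simp add: t_def)
    show "t \<ge> a" using KM1 Ka a1 Mt1 t0 by (simp add: ennreal_le_iff)
    have "ennreal t \<le> ennreal (a + b2)" using M1' unfolding Mt1 .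
    then show "t \<le> a + b2" using a1 b2pos by (subst (asm) ennreal_le_iff) auto
  qed
  have pit: "\<pi> z * t = 1"
  proof -
    have "pint \<pi> (\<lambda>_. 1) = 1"
    proof -
      have "((\<lambda>x. \<pi> x) has_sum 1) UNIV" using stat by (simp add: stationary_distribution_def)
      from nn_of_has_sum[OF _ this] pos show ?thesis by (simp add: pint_def)
    qed
    then have "ennreal (\<pi> z) * ennreal t = 1" using pintM[of "\<lambda>_. 1"] Mt(1) by (simp add: M_def)
    moreover have "ennreal (\<pi> z) * ennreal t = ennreal (\<pi> z * t)"
      using pos Mt(2) a1 by (subst ennreal_mult) auto
    ultimately have "ennreal (\<pi> z * t) = ennreal 1" by simp
    then show ?thesis using pos a1 Mt(2) by (subst (asm) ennreal_inj) auto
  qed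
  define ke where "ke = (\<lambda>x. enn2real (K (\<lambda>y. if y = x then 1 else 0)))"
  have Ke: "K (\<lambda>y. if y = x then 1 else 0) = ennreal (ke x)" "ke x \<ge> 0" for x
  proof -
    have "K (\<lambda>y. if y = x then 1 else 0) \<le> K (\<lambda>_. 1)"
      unfolding K_def by (intro Gop_mono_on[where S=UNIV]) auto
    then have "K (\<lambda>y. if y = x then 1 else 0) < \<infinity>" using Ka by (simp add: order.strict_trans1)
    then show "K (\<lambda>y. if y = x then 1 else 0) = ennreal (ke x)" by (simp add: ke_def less_top)
    show "ke x \<ge> 0" by (simp add: ke_def)
  qed
  have ke0: "ke x = 0" if "x \<notin> A" for x
  proof -
    have "K (\<lambda>y. if y = x then 1 else 0) \<le> Gop P A' (\<lambda>_. 0) z"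
      unfolding K_def by (rule Gop_mono_on[where S=A]) (use that A in \<open>auto simp: A'_def\<close>)
    then show ?thesis by (simp add: ke_def Gop_zero)
  qed
  have Kind: "Gop P A' (indicator {y}) z = ennreal (ke y)" for y
  proof -
    have "indicator {y} = (\<lambda>w. ennreal (if w = y then 1 else 0))"
      by (rule ext) (simp split: split_indicator)
    then show ?thesis using Ke[of y] by (simp add: K_def)
  qed
  have facts: "enn2real (K g) = (\<Sum>y\<in>A. g y * ke y) \<and>
       ((\<lambda>x. \<pi> x * g x) has_sum (\<pi> z * enn2real (M g))) UNIV \<and>
       0 \<le> enn2real (K g) \<and> enn2real (K g) \<le> kr \<and>
       enn2real (K g) \<le> enn2real (M g) \<and> enn2real (M g) \<le> enn2real (K g) + b1"
    if g0: "\<And>x. g x \<ge> 0" and gr: "\<And>x. g x \<le> r x" for g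
  proof -
    have KgKr: "K g \<le> K r" unfolding K_def by (intro Gop_mono_on[where S=UNIV]) (auto simp: gr ennreal_leI)
    have KgM: "K g \<le> M g" unfolding K_def M_def A'_def by (rule Gop_mono_set) auto
    have MK: "M g \<le> K g + ennreal b1"
    proof -
      have "M g \<le> K g + Gop P A' (\<lambda>y. ennreal (h1 y)) z"
        unfolding M_def K_def A'_def
      proof (rule M_le[OF A(2) _ _ out1])
        fix w assume w: "w \<in> -A"
        have wz: "w \<in> -{z}" using w A by auto
        have "Gop P (-{z}) (\<lambda>y. ennreal (g y)) w \<le> Gop P (-{z}) (\<lambda>y. ennreal (r y)) w"
          by (intro Gop_mono_on[where S=UNIV]) (auto simp: gr ennreal_leI)
        also have "Gop P (-{z}) (\<lambda>y. ennreal (r y)) w \<le> ennreal (g1 w)" by (rule G0r[OF wz])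
        finally show "Gop P (-{z}) (\<lambda>y. ennreal (g y)) w \<le> ennreal (g1 w)" .
        show "g1 w \<ge> 0" using g_nonneg wz by blast
      qed
      then show ?thesis using hb1 by (simp add: b1_def)
    qed
    have Kfin: "K g < \<infinity>" using KgKr Kr by (simp add: order.strict_trans1)
    have Mfin: "M g < \<infinity>" using MK Kfin by (simp add: order.strict_trans1 ennreal_add_less_top)
    obtain kg where kg: "K g = ennreal kg" "kg \<ge> 0" using Kfin by (cases "K g") auto
    obtain mg where mg: "M g = ennreal mg" "mg \<ge> 0" using Mfin by (cases "M g") auto
    have b1pos: "b1 \<ge> 0" using hb1 by (simp add: b1_def)
    have "ennreal mg \<le> ennreal (kg + b1)" using MK kg mg b1pos by (simp add: ennreal_plus)
    then have "mg \<le> kg + b1" using kg b1pos by (subst (asm) ennreal_le_iff) auto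
    then have "enn2real (M g) \<le> enn2real (K g) + b1" using kg mg by simp
    moreover have "enn2real (K g) \<le> enn2real (M g)" using KgM Mfin by (simp add: enn2real_mono)
    moreover have "enn2real (K g) \<le> kr" using KgKr Kr kg unfolding kr_def by (simp add: ennreal_le_iff)
    moreover have "((\<lambda>x. \<pi> x * g x) has_sum (\<pi> z * enn2real (M g))) UNIV"
    proof (rule has_sum_of_nn)
      show "\<pi> x * g x \<ge> 0" for x using pos g0 by simp
      have "(\<integral>\<^sup>+x. ennreal (\<pi> x * g x) \<partial>count_space UNIV) = pint \<pi> (\<lambda>y. ennreal (g y))"
        unfolding pint_def by (intro nn_integral_cong) (simp add: ennreal_mult pos g0)
      also have "\<dots> = ennreal (\<pi> z) * M g" by (simp add: pintM M_def)
      also have "\<dots> = ennreal (\<pi> z * enn2real (M g))"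
        using Mfin pos by (simp add: ennreal_mult less_top)
      finally show "(\<integral>\<^sup>+x. ennreal (\<pi> x * g x) \<partial>count_space UNIV) = ennreal (\<pi> z * enn2real (M g))" .
      show "\<pi> z * enn2real (M g) \<ge> 0" using pos by simp
    qed
    moreover have "enn2real (K g) = (\<Sum>y\<in>A. g y * ke y)"
    proof -
      have "K g = (\<integral>\<^sup>+y. ennreal (g y) * ennreal (ke y) \<partial>count_space UNIV)"
        unfolding K_def by (subst Gop_lin) (simp add: Kind)
      also have "\<dots> = (\<Sum>y\<in>A. ennreal (g y) * ennreal (ke y))"
        by (rule nn_integral_count_space') (use A ke0 in auto)
      also have "\<dots> = ennreal (\<Sum>y\<in>A. g y * ke y)"
        using g0 Ke(2) by (simp add: ennreal_mult[symmetric] sum_ennreal)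
      finally show ?thesis using g0 Ke(2) by (simp add: sum_nonneg)
    qed
    moreover have "0 \<le> (\<Sum>y\<in>A. g y * ke y)" using g0 Ke(2) by (simp add: sum_nonneg)
    ultimately show ?thesis by simp
  qed
  have bound: "\<bar>(\<Sum>\<^sub>\<infinity>x. ke x / a * f x) - (\<Sum>\<^sub>\<infinity>x. \<pi> x * f x)\<bar> \<le> 2 * max (b1 / a) (kr / a * (b2 / a))"
    if fr: "\<forall>x. \<bar>f x\<bar> \<le> r x" for f
  proof -
    define fp where "fp = (\<lambda>x. max (f x) 0)"
    define fm where "fm = (\<lambda>x. max (- f x) 0)"
    have fpm: "f x = fp x - fm x" for x by (simp add: fp_def fm_def)
    have fle: "f x \<le> r x" "- f x \<le> r x" for x using fr[rule_format, of x] by (auto simp: abs_le_iff)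
    have fp0: "\<And>x. fp x \<ge> 0" "\<And>x. fp x \<le> r x" using fle r_nonneg by (auto simp: fp_def)
    have fm0: "\<And>x. fm x \<ge> 0" "\<And>x. fm x \<le> r x" using fle r_nonneg by (auto simp: fm_def)
    note Fp = facts[OF fp0] and Fm = facts[OF fm0]
    have "(\<Sum>\<^sub>\<infinity>x. \<pi> x * f x) = \<pi> z * enn2real (M fp) - \<pi> z * enn2real (M fm)"
    proof (rule infsumI)
      have "((\<lambda>x. \<pi> x * fp x + - (\<pi> x * fm x)) has_sum (\<pi> z * enn2real (M fp) + - (\<pi> z * enn2real (M fm)))) UNIV"
        by (intro has_sum_add) (use Fp Fm in \<open>auto simp: has_sum_uminus\<close>)
      then show "((\<lambda>x. \<pi> x * f x) has_sum (\<pi> z * enn2real (M fp) - \<pi> z * enn2real (M fm))) UNIV"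
        by (simp add: fpm right_diff_distrib)
    qed
    also have "\<dots> = (enn2real (M fp) - enn2real (M fm)) / t"
    proof -
      have t0: "t > 0" using a1 Mt(2) by linarith
      have pz: "\<pi> z = 1 / t" using pit t0 by (simp add: field_simps)
      show ?thesis by (simp add: pz diff_divide_distrib)
    qed
    finally have pif: "(\<Sum>\<^sub>\<infinity>x. \<pi> x * f x) = (enn2real (M fp) - enn2real (M fm)) / t" .
    have "(\<Sum>\<^sub>\<infinity>x. ke x / a * f x) = (\<Sum>x\<in>A. ke x / a * f x)"
    proof -
      have "(\<Sum>\<^sub>\<infinity>x. ke x / a * f x) = (\<Sum>\<^sub>\<infinity>x\<in>A. ke x / a * f x)"
        by (rule infsum_cong_neutral) (auto simp: ke0)
      then show ?thesis using A by simp
    qed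
    also have "\<dots> = ((\<Sum>y\<in>A. fp y * ke y) - (\<Sum>y\<in>A. fm y * ke y)) / a"
      by (simp add: fpm sum_divide_distrib sum_subtractf[symmetric] algebra_simps diff_divide_distrib)
    also have "\<dots> = (enn2real (K fp) - enn2real (K fm)) / a" using Fp Fm by simp
    finally have psf: "(\<Sum>\<^sub>\<infinity>x. ke x / a * f x) = (enn2real (K fp) - enn2real (K fm)) / a" .
    show ?thesis unfolding pif psf
      by (rule final_alg) (use a1 Mt hb1 Fp Fm fp0 fm0 Ke(2) in \<open>auto simp: b1_def b2_def intro!: sum_nonneg mult_nonneg_nonneg\<close>)
  qed
  have S_ne: "{\<bar>(\<Sum>\<^sub>\<infinity>x. ke x / a * f x) - (\<Sum>\<^sub>\<infinity>x. \<pi> x * f x)\<bar> | f. \<forall>x. \<bar>f x\<bar> \<le> r x} \<noteq> {}"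
    using r_nonneg by (auto intro!: exI[of _ "\<lambda>_. 0"])
  have rtv_le: "rtv r (\<lambda>x. ke x / a) \<pi> \<le> 2 * max (b1 / a) (kr / a * (b2 / a))"
    unfolding rtv_def by (rule cSup_least[OF S_ne]) (use bound in auto)
  show ?thesis
    unfolding Let_def A'_def[symmetric] occK
    using rtv_le by (simp add: ke_def a_def kr_def b1_def b2_def)
qed


end
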